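(* Let $(A(n))_{n\ge1}$ be an i.i.d. sequence of random topical operators on $\mathbb R^d$ with the memory loss property, and let $\nu_0$ be its invariant probability measure on $\mathbb{PR}^d_{\max}$. Then the support of $\nu_0$ is $$S_{\nu_0}=\overline{\{\overline{\theta\mathbf 1}:\theta\in T_A,\ \theta\text{ of rank }1\}}.$$
   Context: A map $A:\mathbb R^d\to\mathbb R^d$ is topical if it is isotone ($x\le y$ coordinatewise implies $Ax\le Ay$) and additively homogeneous ($A(x+a\mathbf 1)=Ax+a\mathbf 1$, $\mathbf 1=(1,\dots,1)'$). $Top_d$ is the set of topical operators with the topology of uniform convergence on compact sets. $\mathbb{PR}^d_{\max}$ is the quotient of $\mathbb R^d$ by $x\sim y\iff x-y\in\mathbb R\mathbf 1$, $\bar x$ the class of $x$, with metric $\delta(\bar x,\bar y)=\max_i(x_i-y_i)+\max_i(y_i-x_i)$. $A$ has rank 1 if $\overline{Ax}$ does not depend on $x$. The sequence has the memory loss property if some $A(N)\cdots A(1)$ has rank 1 with positive probability. Under this property the Markov chain $\bar x\mapsto\overline{A(n)x}$ on $\mathbb{PR}^d_{\max}$ has a unique invariant probability measure $\nu_0$. $S_A$ is the support of the law of $A(1)$ in $Top_d$ and $T_A$ the semigroup generated by $S_A$ under composition. The overline on the set denotes closure in $\mathbb{PR}^d_{\max}$. *)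

theory Defs
  imports "HOL-Probability.Probability"
begin

definition const_vec :: "real \<Rightarrow> real ^ 'd" where
  "const_vec a = (\<chi> i. a)"

definition topical :: "(real ^ 'd \<Rightarrow> real ^ 'd) \<Rightarrow> bool" where
  "topical f \<longleftrightarrow>
     (\<forall>x y. (\<forall>i. x $ i \<le> y $ i) \<longrightarrow> (\<forall>i. f x $ i \<le> f y $ i)) \<and>
     (\<forall>x a. f (x + const_vec a) = f x + const_vec a)"

definition proj_eq :: "real ^ 'd \<Rightarrow> real ^ 'd \<Rightarrow> bool" where
  "proj_eq x y \<longleftrightarrow> (\<exists>c. x - y = const_vec c)"

lemma proj_eq_equivp: "equivp proj_eq"
proof (rule equivpI)
  show "reflp proj_eq" unfolding reflp_def proj_eq_def const_vec_def
    by (auto intro!: exI[of _ 0] simp: vec_eq_iff)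
  show "symp proj_eq" unfolding symp_def proj_eq_def const_vec_def
    by (auto simp: vec_eq_iff) (metis minus_diff_eq)
  show "transp proj_eq" unfolding transp_def proj_eq_def const_vec_def
    by (auto simp: vec_eq_iff) (metis add.commute diff_add_cancel add_diff_eq)
qed

quotient_type ('d) projmax = "real ^ 'd::finite" / proj_eq
  by (rule proj_eq_equivp)

definition pclass :: "real ^ 'd::finite \<Rightarrow> 'd projmax" where
  "pclass x = abs_projmax x"

definition maxdiff :: "real ^ 'd \<Rightarrow> real ^ 'd \<Rightarrow> real" where
  "maxdiff x y = Max (range (\<lambda>i. x $ i - y $ i))"

definition delta_raw :: "real ^ 'd \<Rightarrow> real ^ 'd \<Rightarrow> real" where
  "delta_raw x y = maxdiff x y + maxdiff y x"

lemma maxdiff_ge: "x $ i - y $ i \<le> maxdiff x y"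
  unfolding maxdiff_def by (rule Max_ge) auto

lemma maxdiff_obtain: "\<exists>i. maxdiff x y = x $ i - y $ i"
proof -
  have "maxdiff x y \<in> range (\<lambda>i. x $ i - y $ i)"
    unfolding maxdiff_def by (rule Max_in) auto
  thus ?thesis by auto
qed

lemma maxdiff_le_iff: "maxdiff x y \<le> c \<longleftrightarrow> (\<forall>i. x $ i - y $ i \<le> c)"
  using maxdiff_ge maxdiff_obtain by (metis order_trans)

lemma maxdiff_shift:
  assumes "x - x' = const_vec a" "y - y' = const_vec b"
  shows "maxdiff x y = maxdiff x' y' + (a - b)"
proof -
  have h: "\<And>i. x $ i - y $ i = (x' $ i - y' $ i) + (a - b)"
    using assms by (auto simp: vec_eq_iff const_vec_def algebra_simps)
  obtain i where i: "maxdiff x y = x $ i - y $ i" using maxdiff_obtain by blast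
  obtain j where j: "maxdiff x' y' = x' $ j - y' $ j" using maxdiff_obtain by blast
  have "x $ i - y $ i \<le> maxdiff x' y' + (a - b)" using h[of i] maxdiff_ge[of x' i y'] by linarith
  moreover have "maxdiff x' y' + (a - b) \<le> maxdiff x y" using h[of j] j maxdiff_ge[of x j y] by linarith
  ultimately show ?thesis using i by linarith
qed

lemma delta_raw_resp:
  assumes "proj_eq x x'" "proj_eq y y'"
  shows "delta_raw x y = delta_raw x' y'"
proof -
  obtain a b where "x - x' = const_vec a" "y - y' = const_vec b"
    using assms unfolding proj_eq_def by auto
  thus ?thesis unfolding delta_raw_def
    using maxdiff_shift[of x x' a y y' b] maxdiff_shift[of y y' b x x' a] by simp
qed

lift_definition delta :: "'d::finite projmax \<Rightarrow> 'd projmax \<Rightarrow> real" is delta_raw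
  using delta_raw_resp by blast

lemma maxdiff_triangle: "maxdiff x y \<le> maxdiff x z + maxdiff z y"
  unfolding maxdiff_le_iff
proof
  fix i
  have "x $ i - z $ i \<le> maxdiff x z" "z $ i - y $ i \<le> maxdiff z y" by (rule maxdiff_ge)+
  thus "x $ i - y $ i \<le> maxdiff x z + maxdiff z y" by linarith
qed

lemma delta_raw_zero: "delta_raw x y = 0 \<longleftrightarrow> proj_eq x y"
proof
  assume h: "delta_raw x y = 0"
  define c where "c = maxdiff x y"
  have "\<forall>i. x $ i - y $ i = c"
  proof
    fix i
    have "y $ i - x $ i \<le> maxdiff y x" by (rule maxdiff_ge)
    moreover have "x $ i - y $ i \<le> c" unfolding c_def by (rule maxdiff_ge)
    ultimately show "x $ i - y $ i = c" using h unfolding delta_raw_def c_def by linarith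
  qed
  thus "proj_eq x y" unfolding proj_eq_def const_vec_def by (auto simp: vec_eq_iff)
next
  assume "proj_eq x y"
  then obtain c where c: "x - y = const_vec c" unfolding proj_eq_def by auto
  have "x - x = const_vec 0" "y - x = const_vec (- c)"
    using c by (auto simp: vec_eq_iff const_vec_def algebra_simps)
  hence "delta_raw x y = delta_raw x x"
    using maxdiff_shift[of x x 0 y x "-c"] maxdiff_shift[of y x "-c" x x 0]
    unfolding delta_raw_def by simp
  also have "delta_raw x x = 0"
  proof -
    have "maxdiff x x = 0"
      using maxdiff_obtain[of x x] by auto
    thus ?thesis unfolding delta_raw_def by simp
  qed
  finally show "delta_raw x y = 0" .
qed

instantiation projmax :: (finite) metric_space
begin

definition dist_projmax :: "'a projmax \<Rightarrow> 'a projmax \<Rightarrow> real" where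
  "dist_projmax = delta"

definition uniformity_projmax :: "('a projmax \<times> 'a projmax) filter" where
  "uniformity_projmax = (INF e\<in>{0 <..}. principal {(x, y). dist x y < e})"

definition open_projmax :: "'a projmax set \<Rightarrow> bool" where
  "open_projmax U \<longleftrightarrow> (\<forall>x\<in>U. eventually (\<lambda>(x', y). x' = x \<longrightarrow> y \<in> U) uniformity)"

instance
proof
  fix x y :: "'a projmax"
  show "dist x y = 0 \<longleftrightarrow> x = y"
    unfolding dist_projmax_def
    by transfer (simp add: delta_raw_zero)
next
  fix x y z :: "'a projmax"
  show "dist x y \<le> dist x z + dist y z"
    unfolding dist_projmax_def
  proof transfer
    fix x y z :: "real ^ 'a"
    have "maxdiff x y \<le> maxdiff x z + maxdiff z y" "maxdiff y x \<le> maxdiff y z + maxdiff z x"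
      by (rule maxdiff_triangle)+
    thus "delta_raw x y \<le> delta_raw x z + delta_raw y z" unfolding delta_raw_def by linarith
  qed
qed (simp_all add: uniformity_projmax_def open_projmax_def)

end

text \<open>Action of an operator on PR^d_max (well defined for topical operators).\<close>
definition pact :: "(real ^ 'd \<Rightarrow> real ^ 'd) \<Rightarrow> 'd projmax \<Rightarrow> 'd projmax" where
  "pact f p = pclass (f (rep_projmax p))"

definition rank_one :: "(real ^ 'd \<Rightarrow> real ^ 'd) \<Rightarrow> bool" where
  "rank_one f \<longleftrightarrow> (\<forall>x y. pclass (f x) = pclass (f y))"

inductive_set comp_semigroup :: "('a \<Rightarrow> 'a) set \<Rightarrow> ('a \<Rightarrow> 'a) set"
  for S :: "('a \<Rightarrow> 'a) set" where
  gen: "f \<in> S \<Longrightarrow> f \<in> comp_semigroup S"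
| comp: "f \<in> comp_semigroup S \<Longrightarrow> g \<in> comp_semigroup S \<Longrightarrow> f \<circ> g \<in> comp_semigroup S"

definition measure_support :: "'a::topological_space measure \<Rightarrow> 'a set" where
  "measure_support \<nu> = {x. \<forall>U. open U \<longrightarrow> x \<in> U \<longrightarrow> emeasure \<nu> U > 0}"

text \<open>Measurable space of operators: product sigma-algebra (generated by evaluations),
  which on Top_d coincides with the Borel sigma-algebra of uniform convergence on compacts.\<close>
abbreviation op_space :: "(real ^ 'd \<Rightarrow> real ^ 'd) measure" where
  "op_space \<equiv> PiM UNIV (\<lambda>_. borel)"

fun op_prod :: "(nat \<Rightarrow> 'w \<Rightarrow> ('a \<Rightarrow> 'a)) \<Rightarrow> nat \<Rightarrow> 'w \<Rightarrow> 'a \<Rightarrow> 'a" where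
  "op_prod A 0 \<omega> = id"
| "op_prod A (Suc n) \<omega> = A (Suc n) \<omega> \<circ> op_prod A n \<omega>"

context prob_space
begin

text \<open>Support S_A of the law of A(1) in Top_d (topology of uniform convergence on compacts):
  theta in Top_d all of whose basic neighbourhoods have positive probability.\<close>
definition op_support :: "('a \<Rightarrow> real ^ 'd \<Rightarrow> real ^ 'd) \<Rightarrow> (real ^ 'd \<Rightarrow> real ^ 'd) set" where
  "op_support B = {\<theta>. topical \<theta> \<and>
      (\<forall>K e. compact K \<longrightarrow> K \<noteq> {} \<longrightarrow> e > 0 \<longrightarrow>
         prob {\<omega> \<in> space M. (SUP x\<in>K. dist (B \<omega> x) (\<theta> x)) < e} > 0)}"

end

end

theory Submission
  imports Defs
begin



lemma pclass_rep[simp]: "pclass (rep_projmax p) = p"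
  unfolding pclass_def using Quotient_abs_rep[OF Quotient_projmax] by blast

lemma pclass_eq_iff: "pclass x = pclass y \<longleftrightarrow> proj_eq x y"
  unfolding pclass_def by (rule projmax.abs_eq_iff)

lemma pclass_cases: obtains x where "p = pclass x"
  using pclass_rep by metis

lemma dist_pclass: "dist (pclass x) (pclass y) = delta_raw x y"
  unfolding dist_projmax_def pclass_def by (rule delta.abs_eq)

lemma const_vec_nth[simp]: "const_vec a $ i = a"
  by (simp add: const_vec_def)

lemma pclass_shift[simp]: "pclass (x + const_vec a) = pclass x"
  unfolding pclass_eq_iff proj_eq_def by (auto intro!: exI[of _ a])

lemma proj_eq_D: "proj_eq x y \<Longrightarrow> \<exists>c. x = y + const_vec c"
  unfolding proj_eq_def by (metis add.commute diff_add_cancel)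

lemma topical_mono: "topical f \<Longrightarrow> (\<And>i. x $ i \<le> y $ i) \<Longrightarrow> f x $ i \<le> f y $ i"
  unfolding topical_def by blast

lemma topical_hom: "topical f \<Longrightarrow> f (x + const_vec a) = f x + const_vec a"
  unfolding topical_def by blast

lemma topical_comp: "topical f \<Longrightarrow> topical g \<Longrightarrow> topical (f \<circ> g)"
  unfolding topical_def by auto

lemma topical_id: "topical id"
  unfolding topical_def by auto

lemma topical_lip_comp:
  assumes "topical f" "\<And>j. \<bar>x $ j - y $ j\<bar> \<le> m"
  shows "\<bar>f x $ i - f y $ i\<bar> \<le> m"
proof -
  have "\<And>j. x $ j \<le> (y + const_vec m) $ j" "\<And>j. y $ j \<le> (x + const_vec m) $ j"
    using assms(2) by (auto simp: abs_le_iff) (smt (verit) assms(2))+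
  hence "f x $ i \<le> f (y + const_vec m) $ i" "f y $ i \<le> f (x + const_vec m) $ i"
    using topical_mono[OF assms(1)] by blast+
  thus ?thesis using topical_hom[OF assms(1)] by (simp add: abs_le_iff)
qed

lemma topical_dist:
  fixes x y :: "real ^ 'd"
  assumes "topical f"
  shows "dist (f x) (f y) \<le> real CARD('d) * dist x y"
proof -
  have "dist (f x) (f y) = norm (f x - f y)" by (simp add: dist_norm)
  also have "\<dots> \<le> (\<Sum>i\<in>UNIV. \<bar>(f x - f y) $ i\<bar>)" by (rule norm_le_l1_cart)
  also have "\<dots> \<le> (\<Sum>i\<in>(UNIV::'d set). dist x y)"
  proof (rule sum_mono)
    fix i
    have "\<And>j. \<bar>x $ j - y $ j\<bar> \<le> dist x y"
      by (metis component_le_norm_cart dist_norm vector_minus_component)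
    thus "\<bar>(f x - f y) $ i\<bar> \<le> dist x y" using topical_lip_comp[OF assms] by simp
  qed
  also have "\<dots> = real CARD('d) * dist x y" by simp
  finally show ?thesis .
qed

lemma topical_continuous: "topical f \<Longrightarrow> continuous_on S (f :: real ^ 'd \<Rightarrow> real ^ 'd)"
proof -
  assume t: "topical f"
  have "real CARD('d) > 0" by simp
  show ?thesis
    unfolding continuous_on_iff
  proof (intro ballI allI impI)
    fix x e assume "x \<in> S" "(0::real) < e"
    show "\<exists>d>0. \<forall>x'\<in>S. dist x' x < d \<longrightarrow> dist (f x') (f x) < e"
    proof (intro exI[of _ "e / real CARD('d)"] conjI ballI impI)
      show "e / real CARD('d) > 0" using \<open>e > 0\<close> by simp
      fix x' assume "dist x' x < e / real CARD('d)"
      hence "real CARD('d) * dist x' x < e" by (simp add: field_simps mult.commute)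
      thus "dist (f x') (f x) < e" using topical_dist[OF t, of x' x] by linarith
    qed
  qed
qed

lemma maxdiff_topical: "topical f \<Longrightarrow> maxdiff (f x) (f y) \<le> maxdiff x y"
proof -
  assume t: "topical f"
  have "\<And>j. x $ j \<le> (y + const_vec (maxdiff x y)) $ j"
    using maxdiff_ge[of x _ y] by (simp add: algebra_simps)
  hence "\<And>i. f x $ i \<le> f (y + const_vec (maxdiff x y)) $ i" using topical_mono[OF t] by blast
  hence "\<And>i. f x $ i - f y $ i \<le> maxdiff x y" using topical_hom[OF t] by (simp add: algebra_simps)
  thus ?thesis by (simp add: maxdiff_le_iff)
qed

lemma delta_raw_topical: "topical f \<Longrightarrow> delta_raw (f x) (f y) \<le> delta_raw x y"
  unfolding delta_raw_def using maxdiff_topical by (metis add_mono)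

lemma pact_pclass: "topical f \<Longrightarrow> pact f (pclass x) = pclass (f x)"
proof -
  assume t: "topical f"
  have "proj_eq (rep_projmax (pclass x)) x"
    using pclass_rep[of "pclass x"] pclass_eq_iff by blast
  then obtain c where "rep_projmax (pclass x) = x + const_vec c" using proj_eq_D by blast
  thus ?thesis unfolding pact_def using topical_hom[OF t] by simp
qed

lemma pact_dist: "topical f \<Longrightarrow> dist (pact f p) (pact f q) \<le> dist p q"
  by (cases p rule: pclass_cases, cases q rule: pclass_cases)
     (simp add: pact_pclass dist_pclass delta_raw_topical)

lemma pact_comp: "topical f \<Longrightarrow> topical g \<Longrightarrow> pact (f \<circ> g) p = pact f (pact g p)"
  by (cases p rule: pclass_cases) (simp add: pact_pclass topical_comp)

lemma pact_id[simp]: "pact id p = p"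
  unfolding pact_def by simp

lemma maxdiff_le_dist: "maxdiff x y \<le> dist x y"
  unfolding maxdiff_le_iff
  by (metis component_le_norm_cart dist_norm vector_minus_component abs_le_iff)

lemma dist_pclass_le: "dist (pclass x) (pclass y) \<le> 2 * dist x y"
  unfolding dist_pclass delta_raw_def using maxdiff_le_dist[of x y] maxdiff_le_dist[of y x]
  by (simp add: dist_commute)

lemma continuous_pclass: "continuous_on S pclass"
  unfolding continuous_on_iff
proof (intro ballI allI impI)
  fix x e assume "x \<in> S" "(0::real) < e"
  show "\<exists>d>0. \<forall>x'\<in>S. dist x' x < d \<longrightarrow> dist (pclass x') (pclass x) < e"
  proof (intro exI[of _ "e/2"] conjI ballI impI)
    fix x' assume "dist x' x < e/2"
    thus "dist (pclass x') (pclass x) < e" using dist_pclass_le[of x' x] by linarith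
  qed (use \<open>e>0\<close> in auto)
qed

lemma pact_rank_one: "rank_one f \<Longrightarrow> pact f p = pclass (f (const_vec 1))"
  unfolding rank_one_def pact_def by blast

definition sec :: "'d::finite projmax \<Rightarrow> real ^ 'd" where
  "sec p = rep_projmax p - const_vec (rep_projmax p $ undefined)"

lemma pclass_sec[simp]: "pclass (sec p) = p"
proof -
  have "sec p = rep_projmax p + const_vec (- (rep_projmax p $ undefined))"
    unfolding sec_def by (simp add: const_vec_def vec_eq_iff)
  thus ?thesis by simp
qed

lemma maxdiff_nonneg: "maxdiff x y \<ge> - maxdiff y x"
  using maxdiff_ge[of x i y] maxdiff_ge[of y i x] by linarith

lemma sec_comp_le: "\<bar>sec p $ i - sec q $ i\<bar> \<le> dist p q"
proof -
  define x where "x = rep_projmax p"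
  define y where "y = rep_projmax q"
  have d: "dist p q = delta_raw x y" unfolding x_def y_def using dist_pclass pclass_rep by metis
  have "sec p $ i - sec q $ i = (x $ i - y $ i) - (x $ undefined - y $ undefined)"
    unfolding sec_def x_def y_def by simp
  moreover have "x $ i - y $ i \<le> maxdiff x y" "y $ i - x $ i \<le> maxdiff y x"
    "x $ undefined - y $ undefined \<le> maxdiff x y" "y $ undefined - x $ undefined \<le> maxdiff y x"
    by (rule maxdiff_ge)+
  ultimately show ?thesis unfolding d delta_raw_def by (simp add: abs_le_iff)
qed

lemma dist_sec:
  fixes p q :: "'d::finite projmax"
  shows "dist (sec p) (sec q) \<le> real CARD('d) * dist p q"
proof -
  have "dist (sec p) (sec q) = norm (sec p - sec q)" by (simp add: dist_norm)
  also have "\<dots> \<le> (\<Sum>i\<in>UNIV. \<bar>(sec p - sec q) $ i\<bar>)" by (rule norm_le_l1_cart)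
  also have "\<dots> \<le> (\<Sum>i\<in>(UNIV::'d set). dist p q)"
    by (rule sum_mono) (simp add: sec_comp_le)
  finally show ?thesis by simp
qed

lemma continuous_sec: "continuous_on S (sec :: 'd::finite projmax \<Rightarrow> _)"
  unfolding continuous_on_iff
proof (intro ballI allI impI)
  fix x :: "'d projmax" and e :: real assume "x \<in> S" "0 < e"
  show "\<exists>d>0. \<forall>x'\<in>S. dist x' x < d \<longrightarrow> dist (sec x') (sec x) < e"
  proof (intro exI[of _ "e / real CARD('d)"] conjI ballI impI)
    show "e / real CARD('d) > 0" using \<open>e > 0\<close> by simp
    fix x' assume "dist x' x < e / real CARD('d)"
    hence "real CARD('d) * dist x' x < e" by (simp add: field_simps mult.commute)
    thus "dist (sec x') (sec x) < e" using dist_sec[of x' x] by linarith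
  qed
qed

lemma pact_sec: "topical f \<Longrightarrow> pact f p = pclass (f (sec p))"
  using pact_pclass[of f "sec p"] by simp




locale lm = prob_space M for M :: "'w measure" +
  fixes A :: "nat \<Rightarrow> 'w \<Rightarrow> (real ^ 'd::finite \<Rightarrow> real ^ 'd)"
    and \<nu>0 :: "'d projmax measure"
  assumes rv: "\<And>n. n \<ge> 1 \<Longrightarrow> A n \<in> M \<rightarrow>\<^sub>M op_space"
    and topical: "\<And>n \<omega>. n \<ge> 1 \<Longrightarrow> \<omega> \<in> space M \<Longrightarrow> topical (A n \<omega>)"
    and indep: "indep_vars (\<lambda>_. op_space) A {1..}"
    and ident: "\<And>n. n \<ge> 1 \<Longrightarrow> distr M op_space (A n) = distr M op_space (A 1)"
    and memory_loss: "\<exists>N\<ge>1. measure M {\<omega> \<in> space M. rank_one (op_prod A N \<omega>)} > 0"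
    and nu_prob: "prob_space \<nu>0"
    and nu_sets: "sets \<nu>0 = sets borel"
    and nu_inv: "\<And>B. B \<in> sets borel \<Longrightarrow>
        emeasure \<nu>0 B = (\<integral>\<^sup>+ p. emeasure M {\<omega> \<in> space M. pact (A 1 \<omega>) p \<in> B} \<partial>\<nu>0)"
begin

lemma pclass_meas[measurable]: "pclass \<in> borel_measurable borel"
  by (rule borel_measurable_continuous_onI[OF continuous_pclass])

lemma sec_meas[measurable]: "sec \<in> borel_measurable borel"
  by (rule borel_measurable_continuous_onI[OF continuous_sec])

lemma meas_eval: "n \<ge> 1 \<Longrightarrow> (\<lambda>\<omega>. A n \<omega> x) \<in> M \<rightarrow>\<^sub>M borel"
  using measurable_compose[OF rv measurable_component_singleton[of x UNIV "\<lambda>_. borel"]] by simp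

lemma meas_pact_pt: "n \<ge> 1 \<Longrightarrow> (\<lambda>\<omega>. pact (A n \<omega>) p) \<in> M \<rightarrow>\<^sub>M borel"
  unfolding pact_def using measurable_compose[OF meas_eval pclass_meas] by blast

lemma sets_pact_pt: "n \<ge> 1 \<Longrightarrow> B \<in> sets borel \<Longrightarrow> {\<omega> \<in> space M. pact (A n \<omega>) p \<in> B} \<in> sets M"
  using measurable_sets[OF meas_pact_pt] by (simp add: vimage_def Int_def conj_commute)

lemma open_nbhd: "open {p. \<exists>w\<in>V. dist p (F w) < (e::real)}"
proof -
  have "{p. \<exists>w\<in>V. dist p (F w) < e} = (\<Union>w\<in>V. ball (F w) e)"
    by (auto simp: dist_commute)
  thus ?thesis by auto
qed

lemma open_sets_nu: "open U \<Longrightarrow> U \<in> sets \<nu>0"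
  using nu_sets by simp

lemma sup_bound:
  fixes f g :: "real ^ 'd \<Rightarrow> real ^ 'd"
  assumes "topical f" "topical g" "compact K" "x \<in> K"
  shows "dist (f x) (g x) \<le> (SUP y\<in>K. dist (f y) (g y))"
proof (rule cSUP_upper[OF assms(4)])
  have "continuous_on K (\<lambda>y. dist (f y) (g y))"
    by (intro continuous_on_dist topical_continuous assms)
  hence "compact ((\<lambda>y. dist (f y) (g y)) ` K)" using assms(3) by (rule compact_continuous_image)
  thus "bdd_above ((\<lambda>y. dist (f y) (g y)) ` K)" by (intro bounded_imp_bdd_above compact_imp_bounded)
qed

lemma gen_step:
  assumes th: "\<theta> \<in> op_support (A 1)" and V: "open V" "V \<subseteq> ball c \<rho>" "emeasure \<nu>0 V > 0"
    and e: "\<epsilon> > 0"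
  shows "emeasure \<nu>0 {p. \<exists>w\<in>V. dist p (pact \<theta> w) < \<epsilon>} > 0"
proof -
  define K where "K = cball (sec c) (real CARD('d) * \<rho>)"
  have tth: "topical \<theta>" using th unfolding op_support_def by blast
  have Kc: "compact K" "K \<noteq> {}"
  proof -
    show "compact K" unfolding K_def by simp
    obtain v where "v \<in> V" using V(3) by (metis emeasure_empty less_irrefl ex_in_conv)
    hence "dist c v < \<rho>" using V(2) by auto
    hence "\<rho> \<ge> 0" by (smt (verit) zero_le_dist)
    thus "K \<noteq> {}" unfolding K_def by (simp add: not_less)
  qed
  define \<Omega> where "\<Omega> = {\<omega> \<in> space M. (SUP x\<in>K. dist (A 1 \<omega> x) (\<theta> x)) < \<epsilon>/2}"
  have pos: "prob \<Omega> > 0"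
  proof -
    have "\<forall>K e. compact K \<longrightarrow> K \<noteq> {} \<longrightarrow> e > 0 \<longrightarrow>
         prob {\<omega> \<in> space M. (SUP x\<in>K. dist (A 1 \<omega> x) (\<theta> x)) < e} > 0"
      using th unfolding op_support_def by blast
    hence "compact K \<longrightarrow> K \<noteq> {} \<longrightarrow> \<epsilon>/2 > 0 \<longrightarrow>
         prob {\<omega> \<in> space M. (SUP x\<in>K. dist (A 1 \<omega> x) (\<theta> x)) < \<epsilon>/2} > 0" by blast
    thus ?thesis unfolding \<Omega>_def using Kc e by simp
  qed
  hence \<Omega>sets: "\<Omega> \<in> sets M" using measure_notin_sets by force
  define W where "W = {p. \<exists>w\<in>V. dist p (pact \<theta> w) < \<epsilon>}"
  have Wo: "open W" unfolding W_def by (rule open_nbhd)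
  have sub: "\<Omega> \<subseteq> {\<omega> \<in> space M. pact (A 1 \<omega>) p \<in> W}" if p: "p \<in> V" for p
  proof
    fix \<omega> assume om: "\<omega> \<in> \<Omega>"
    hence sp: "\<omega> \<in> space M" unfolding \<Omega>_def by auto
    have ta: "topical (A 1 \<omega>)" using topical[OF _ sp] by simp
    have "dist (sec p) (sec c) \<le> real CARD('d) * dist p c" by (rule dist_sec)
    also have "\<dots> \<le> real CARD('d) * \<rho>" using p V(2) by (auto simp: dist_commute intro!: mult_left_mono)
    finally have "sec p \<in> K" unfolding K_def by (simp add: dist_commute)
    hence "dist (A 1 \<omega> (sec p)) (\<theta> (sec p)) < \<epsilon>/2"
      using sup_bound[OF ta tth Kc(1)] om unfolding \<Omega>_def by fastforce
    hence "dist (pact (A 1 \<omega>) p) (pact \<theta> p) < \<epsilon>"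
      using dist_pclass_le[of "A 1 \<omega> (sec p)" "\<theta> (sec p)"] unfolding pact_sec[OF ta, of p] pact_sec[OF tth, of p]
      by linarith
    thus "\<omega> \<in> {\<omega> \<in> space M. pact (A 1 \<omega>) p \<in> W}" using sp p unfolding W_def by auto
  qed
  have "0 < emeasure M \<Omega> * emeasure \<nu>0 V"
    using pos V(3) by (simp add: ennreal_zero_less_mult_iff emeasure_eq_measure)
  also have "\<dots> = (\<integral>\<^sup>+ p. emeasure M \<Omega> * indicator V p \<partial>\<nu>0)"
    using nn_integral_cmult_indicator[OF open_sets_nu[OF V(1)]] by simp
  also have "\<dots> \<le> (\<integral>\<^sup>+ p. emeasure M {\<omega> \<in> space M. pact (A 1 \<omega>) p \<in> W} \<partial>\<nu>0)"
  proof (rule nn_integral_mono)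
    fix p
    show "emeasure M \<Omega> * indicator V p \<le> emeasure M {\<omega> \<in> space M. pact (A 1 \<omega>) p \<in> W}"
    proof (cases "p \<in> V")
      case True
      thus ?thesis using emeasure_mono[OF sub[OF True] sets_pact_pt[of 1 W p]] Wo by simp
    qed simp
  qed
  also have "\<dots> = emeasure \<nu>0 W" using nu_inv[of W] Wo by simp
  finally show ?thesis unfolding W_def .
qed

lemma semigroup_step:
  assumes "\<theta> \<in> comp_semigroup (op_support (A 1))"
  shows "topical \<theta> \<and> (\<forall>V c \<rho> \<epsilon>. open V \<longrightarrow> V \<subseteq> ball c \<rho> \<longrightarrow> emeasure \<nu>0 V > 0 \<longrightarrow> \<epsilon> > 0 \<longrightarrow>
           emeasure \<nu>0 {p. \<exists>w\<in>V. dist p (pact \<theta> w) < \<epsilon>} > 0)"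
  using assms
proof (induction rule: comp_semigroup.induct)
  case (gen f)
  thus ?case using gen_step[of f] unfolding op_support_def by blast
next
  case (comp f g)
  have tf: "topical f" and tg: "topical g" using comp.IH by blast+
  have "emeasure \<nu>0 {p. \<exists>w\<in>V. dist p (pact (f \<circ> g) w) < \<epsilon>} > 0"
    if V: "open V" "V \<subseteq> ball c \<rho>" "emeasure \<nu>0 V > 0" and e: "\<epsilon> > 0" for V c \<rho> \<epsilon>
  proof -
    define W where "W = {p. \<exists>w\<in>V. dist p (pact g w) < \<epsilon>/2}"
    have Wo: "open W" unfolding W_def by (rule open_nbhd)
    have Wb: "W \<subseteq> ball (pact g c) (\<rho> + \<epsilon>/2)"
    proof
      fix p assume "p \<in> W"
      then obtain w where w: "w \<in> V" "dist p (pact g w) < \<epsilon>/2" unfolding W_def by blast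
      have "dist (pact g w) (pact g c) \<le> dist w c" by (rule pact_dist[OF tg])
      moreover have "dist w c < \<rho>" using w V(2) by (auto simp: dist_commute)
      ultimately have "dist p (pact g c) < \<rho> + \<epsilon>/2" using w(2) dist_triangle[of p "pact g c" "pact g w"] by linarith
      thus "p \<in> ball (pact g c) (\<rho> + \<epsilon>/2)" by (simp add: dist_commute)
    qed
    have "\<forall>\<epsilon>'. \<epsilon>' > 0 \<longrightarrow> emeasure \<nu>0 {p. \<exists>w\<in>V. dist p (pact g w) < \<epsilon>'} > 0"
      using comp.IH(2) V by blast
    hence Wp: "emeasure \<nu>0 W > 0" using half_gt_zero[OF e] unfolding W_def by blast
    define W2 where "W2 = {p. \<exists>w\<in>W. dist p (pact f w) < \<epsilon>/2}"
    have "\<forall>\<epsilon>'. \<epsilon>' > 0 \<longrightarrow> emeasure \<nu>0 {p. \<exists>w\<in>W. dist p (pact f w) < \<epsilon>'} > 0"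
      using comp.IH(1) Wo Wb Wp by blast
    hence W2p: "emeasure \<nu>0 W2 > 0" using half_gt_zero[OF e] unfolding W2_def by blast
    have sub: "W2 \<subseteq> {p. \<exists>w\<in>V. dist p (pact (f \<circ> g) w) < \<epsilon>}"
    proof
      fix p assume "p \<in> W2"
      then obtain w' where w': "w' \<in> W" "dist p (pact f w') < \<epsilon>/2" unfolding W2_def by blast
      then obtain w where w: "w \<in> V" "dist w' (pact g w) < \<epsilon>/2" unfolding W_def by blast
      have "dist (pact f w') (pact f (pact g w)) \<le> dist w' (pact g w)" by (rule pact_dist[OF tf])
      hence "dist p (pact f (pact g w)) < \<epsilon>"
        using w' w dist_triangle[of p "pact f (pact g w)" "pact f w'"] by linarith
      thus "p \<in> {p. \<exists>w\<in>V. dist p (pact (f \<circ> g) w) < \<epsilon>}" using w pact_comp[OF tf tg] by auto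
    qed
    show ?thesis using emeasure_mono[OF sub open_sets_nu[OF open_nbhd]] W2p by simp
  qed
  thus ?case using topical_comp[OF tf tg] by blast
qed

lemma nu_ball_pos: "\<exists>c \<rho>. emeasure \<nu>0 (ball c \<rho>) > 0"
proof (rule ccontr)
  assume "\<not> ?thesis"
  hence z: "\<And>n. emeasure \<nu>0 (ball undefined (real n)) = 0" by (simp add: not_less)
  have "(\<Union>n. ball (undefined :: 'd projmax) (real n)) = UNIV"
  proof safe
    fix x :: "'d projmax"
    obtain n where "dist undefined x < real n" using reals_Archimedean2 by blast
    thus "x \<in> (\<Union>n. ball undefined (real n))" by auto
  qed auto
  moreover have "emeasure \<nu>0 (\<Union>n. ball undefined (real n)) = 0"
    by (rule emeasure_UN_eq_0) (use z open_sets_nu in auto)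
  moreover have "emeasure \<nu>0 (space \<nu>0) = 1" using nu_prob by (simp add: prob_space.emeasure_space_1)
  moreover have "space \<nu>0 = UNIV" using sets_eq_imp_space_eq[OF nu_sets] by simp
  ultimately show False by simp
qed

lemma supp_sup:
  "closure {pclass (\<theta> (const_vec 1)) | \<theta>. \<theta> \<in> comp_semigroup (op_support (A 1)) \<and> rank_one \<theta>}
     \<subseteq> measure_support \<nu>0"
proof
  let ?T = "{pclass (\<theta> (const_vec 1)) | \<theta>. \<theta> \<in> comp_semigroup (op_support (A 1)) \<and> rank_one \<theta>}"
  have inT: "emeasure \<nu>0 U > 0" if hU: "open U" "y \<in> U" "y \<in> ?T" for U y
  proof -
    obtain \<theta> where th: "\<theta> \<in> comp_semigroup (op_support (A 1))" "rank_one \<theta>" "y = pclass (\<theta> (const_vec 1))"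
      using hU(3) by blast
    obtain \<epsilon> where e: "\<epsilon> > 0" "ball y \<epsilon> \<subseteq> U" using hU(1,2) open_contains_ball by blast
    obtain c \<rho> where cr: "emeasure \<nu>0 (ball c \<rho>) > 0" using nu_ball_pos by blast
    have pos: "emeasure \<nu>0 {p. \<exists>w\<in>ball c \<rho>. dist p (pact \<theta> w) < \<epsilon>} > 0"
      using semigroup_step[OF th(1)] cr e by blast
    have "{p. \<exists>w\<in>ball c \<rho>. dist p (pact \<theta> w) < \<epsilon>} \<subseteq> U"
      using e(2) pact_rank_one[OF th(2)] th(3) by (auto simp: dist_commute)
    thus ?thesis using emeasure_mono[OF _ open_sets_nu[OF hU(1)]] pos by (meson order_less_le_trans)
  qed
  fix x assume x: "x \<in> closure ?T"
  show "x \<in> measure_support \<nu>0"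
    unfolding measure_support_def
  proof (intro CollectI allI impI)
    fix U assume U: "open U" "x \<in> U"
    then obtain y where "y \<in> ?T" "y \<in> U" using x closure_iff_nhds_not_empty[of x ?T] by blast
    thus "emeasure \<nu>0 U > 0" using inT U by blast
  qed
qed

end



definition dyc :: "nat \<Rightarrow> ('d::finite \<Rightarrow> int) \<Rightarrow> real ^ 'd" where
  "dyc k z = (\<chi> i. real_of_int (z i) / 2 ^ k)"

definition rk :: "nat \<Rightarrow> real ^ 'd::finite \<Rightarrow> real ^ 'd" where
  "rk k y = dyc k (\<lambda>i. \<lfloor>2 ^ k * y $ i\<rfloor>)"

definition Dset :: "(real ^ 'd::finite) set" where
  "Dset = (\<lambda>(k, z). dyc k z) ` UNIV"

abbreviation OPS :: "(real ^ 'd::finite \<Rightarrow> real ^ 'd) measure" where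
  "OPS \<equiv> PiM Dset (\<lambda>_. borel)"

definition ev :: "(real ^ 'd::finite \<Rightarrow> real ^ 'd) \<Rightarrow> real ^ 'd \<Rightarrow> real ^ 'd" where
  "ev \<phi> y = lim (\<lambda>k. \<phi> (rk k y))"

definition T :: "(real ^ 'd::finite \<Rightarrow> real ^ 'd) \<Rightarrow> 'd projmax \<Rightarrow> 'd projmax" where
  "T \<phi> p = pclass (ev \<phi> (sec p))"

lemma countable_Dset: "countable (Dset :: (real ^ 'd::finite) set)"
  unfolding Dset_def by simp

lemma dyc_in_Dset: "dyc k z \<in> Dset"
  unfolding Dset_def by auto

lemma rk_in_Dset: "rk k y \<in> Dset"
  unfolding rk_def by (rule dyc_in_Dset)

lemma rk_comp_le: "\<bar>rk k y $ i - y $ i\<bar> \<le> 1 / 2 ^ k"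
proof -
  have p: "(2::real) ^ k > 0" by simp
  have "real_of_int \<lfloor>2 ^ k * y $ i\<rfloor> \<le> 2 ^ k * y $ i" "2 ^ k * y $ i < real_of_int \<lfloor>2 ^ k * y $ i\<rfloor> + 1"
    by linarith+
  hence "real_of_int \<lfloor>2 ^ k * y $ i\<rfloor> / 2 ^ k \<le> y $ i" "y $ i < (real_of_int \<lfloor>2 ^ k * y $ i\<rfloor> + 1) / 2 ^ k"
    using p by (simp_all add: divide_simps mult.commute)
  thus ?thesis unfolding rk_def dyc_def using p by (simp add: abs_le_iff add_divide_distrib)
qed

lemma dist_rk: "dist (rk k y) y \<le> real CARD('d) / 2 ^ k" for y :: "real ^ 'd::finite"
proof -
  have "dist (rk k y) y = norm (rk k y - y)" by (simp add: dist_norm)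
  also have "\<dots> \<le> (\<Sum>i\<in>UNIV. \<bar>(rk k y - y) $ i\<bar>)" by (rule norm_le_l1_cart)
  also have "\<dots> \<le> (\<Sum>i\<in>(UNIV::'d set). 1 / 2 ^ k)" by (rule sum_mono) (simp add: rk_comp_le)
  finally show ?thesis by simp
qed

lemma rk_tendsto: "(\<lambda>k. rk k y) \<longlonglongrightarrow> y" for y :: "real ^ 'd::finite"
proof (rule LIMSEQ_I)
  fix r :: real assume r: "r > 0"
  define c where "c = real CARD('d)"
  have c: "c > 0" unfolding c_def by simp
  have "\<exists>n. (1/2::real) ^ n < r / c" by (rule real_arch_pow_inv) (use r c in auto)
  then obtain n0 where n0: "(1/2::real) ^ n0 < r / c" by blast
  show "\<exists>no. \<forall>n\<ge>no. norm (rk n y - y) < r"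
  proof (intro exI allI impI)
    fix n assume "n0 \<le> n"
    hence "(1/2::real) ^ n \<le> (1/2) ^ n0" by (intro power_decreasing) auto
    hence "c * (1/2) ^ n \<le> c * (1/2) ^ n0" using c by (intro mult_left_mono) auto
    also have "\<dots> < c * (r / c)" using n0 c by (intro mult_strict_left_mono)
    also have "\<dots> = r" using c by simp
    finally have "c * (1/2) ^ n < r" .
    moreover have "dist (rk n y) y \<le> c * (1/2) ^ n"
      using dist_rk[of n y] unfolding c_def by (simp add: power_one_over)
    ultimately show "norm (rk n y - y) < r" by (simp add: dist_norm)
  qed
qed

lemma Dset_dense: "\<exists>x\<in>Dset. dist x y < e" if "e > 0"
proof -
  have "\<forall>\<^sub>F k in sequentially. dist (rk k y) y < e" using rk_tendsto[of y] that tendstoD by blast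
  then obtain k where "dist (rk k y) y < e" by (meson eventually_sequentially order_refl)
  thus ?thesis using rk_in_Dset by blast
qed

lemma ev_topical: "topical a \<Longrightarrow> ev (restrict a Dset) y = a y"
proof -
  assume t: "topical a"
  have "isCont a y" using topical_continuous[OF t, of UNIV] by (simp add: continuous_on_eq_continuous_at)
  hence "(\<lambda>k. a (rk k y)) \<longlonglongrightarrow> a y" using rk_tendsto isCont_tendsto_compose by blast
  moreover have "(\<lambda>k. restrict a Dset (rk k y)) = (\<lambda>k. a (rk k y))" by (simp add: rk_in_Dset)
  ultimately show ?thesis unfolding ev_def by (simp add: limI)
qed

lemma T_topical: "topical a \<Longrightarrow> T (restrict a Dset) p = pact a p"
  unfolding T_def by (simp add: ev_topical pact_sec)

lemma meas_floor_vec: "(\<lambda>y::real ^ 'd::finite. (\<lambda>i. \<lfloor>2 ^ k * y $ i\<rfloor>)) \<in> borel \<rightarrow>\<^sub>M count_space UNIV"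
proof (subst measurable_count_space_eq2_countable, intro conjI ballI)
  show "(\<lambda>y::real ^ 'd. (\<lambda>i. \<lfloor>2 ^ k * y $ i\<rfloor>)) \<in> space borel \<rightarrow> UNIV" by simp
  fix z :: "'d \<Rightarrow> int" assume "z \<in> UNIV"
  have "(\<lambda>y::real ^ 'd. (\<lambda>i. \<lfloor>2 ^ k * y $ i\<rfloor>)) -` {z} = {y. \<forall>i. \<lfloor>2 ^ k * y $ i\<rfloor> = z i}"
    by (auto simp: fun_eq_iff)
  also have "\<dots> = (\<Inter>i. {y. real_of_int (z i) \<le> 2 ^ k * y $ i \<and> 2 ^ k * y $ i < real_of_int (z i) + 1})"
    by (auto simp: floor_eq_iff)
  also have "\<dots> \<in> sets borel" by measurable
  finally show "(\<lambda>y::real ^ 'd. (\<lambda>i. \<lfloor>2 ^ k * y $ i\<rfloor>)) -` {z} \<inter> space borel \<in> sets borel" by simp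
qed

lemma meas_eval_rk: "(\<lambda>x. fst x (rk k (snd x))) \<in> (OPS \<Otimes>\<^sub>M (borel :: (real ^ 'd::finite) measure)) \<rightarrow>\<^sub>M borel"
proof -
  have "(\<lambda>x. (\<lambda>z. fst x (dyc k z)) ((\<lambda>i. \<lfloor>2 ^ k * snd x $ i\<rfloor>)) ) \<in> (OPS \<Otimes>\<^sub>M (borel :: (real ^ 'd) measure)) \<rightarrow>\<^sub>M borel"
  proof (rule measurable_compose_countable[where f="\<lambda>z x. fst x (dyc k z)"])
    fix z :: "'d \<Rightarrow> int"
    show "(\<lambda>x. fst x (dyc k z)) \<in> (OPS \<Otimes>\<^sub>M (borel :: (real ^ 'd) measure)) \<rightarrow>\<^sub>M borel"
      by (rule measurable_compose[OF measurable_fst measurable_component_singleton[OF dyc_in_Dset]])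
  next
    show "(\<lambda>x. (\<lambda>i. \<lfloor>2 ^ k * snd x $ i\<rfloor>)) \<in> (OPS \<Otimes>\<^sub>M (borel :: (real ^ 'd) measure)) \<rightarrow>\<^sub>M count_space UNIV"
      by (rule measurable_compose[OF measurable_snd meas_floor_vec])
  qed
  thus ?thesis unfolding rk_def by simp
qed

lemma meas_ev: "(\<lambda>x. ev (fst x) (snd x)) \<in> (OPS \<Otimes>\<^sub>M (borel :: (real ^ 'd::finite) measure)) \<rightarrow>\<^sub>M borel"
  unfolding ev_def by (rule borel_measurable_lim_metric[where f="\<lambda>k x. fst x (rk k (snd x))", OF meas_eval_rk])

lemma meas_T: "(\<lambda>x. T (fst x) (snd x)) \<in> (OPS \<Otimes>\<^sub>M (borel :: 'd::finite projmax measure)) \<rightarrow>\<^sub>M borel"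
proof -
  have s: "(\<lambda>x. (fst x, sec (snd x))) \<in> (OPS \<Otimes>\<^sub>M (borel :: 'd projmax measure)) \<rightarrow>\<^sub>M (OPS \<Otimes>\<^sub>M borel)"
    by (rule measurable_Pair[OF measurable_fst measurable_compose[OF measurable_snd borel_measurable_continuous_onI[OF continuous_sec]]])
  have "(\<lambda>x. pclass (ev (fst x) (sec (snd x)))) \<in> (OPS \<Otimes>\<^sub>M (borel :: 'd projmax measure)) \<rightarrow>\<^sub>M borel"
    using measurable_compose[OF measurable_compose[OF s meas_ev] borel_measurable_continuous_onI[OF continuous_pclass]]
    by simp
  thus ?thesis unfolding T_def .
qed

lemma meas_restrict_op: "(\<lambda>a. restrict a Dset) \<in> (op_space :: (real ^ 'd::finite \<Rightarrow> real ^ 'd) measure) \<rightarrow>\<^sub>M OPS"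
  by (rule measurable_restrict_subset) simp




fun Git :: "(nat \<Rightarrow> (real ^ 'd::finite \<Rightarrow> real ^ 'd)) \<Rightarrow> 'd projmax \<Rightarrow> nat \<Rightarrow> 'd projmax" where
  "Git fs p 0 = p"
| "Git fs p (Suc n) = T (fs (Suc n)) (Git fs p n)"

context lm
begin

lemma meas_Phi: "n \<ge> 1 \<Longrightarrow> (\<lambda>\<omega>. restrict (A n \<omega>) Dset) \<in> M \<rightarrow>\<^sub>M OPS"
  using measurable_compose[OF rv meas_restrict_op] by simp

lemma op_prod_topical: "\<omega> \<in> space M \<Longrightarrow> topical (op_prod A n \<omega>)"
proof (induction n)
  case 0
  then show ?case using topical_id by (simp only: op_prod.simps)
next
  case (Suc n)
  have a: "topical (A (Suc n) \<omega>)" using topical[OF _ Suc.prems] by simp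
  have b: "topical (op_prod A n \<omega>)" using Suc.IH Suc.prems by blast
  show ?case unfolding op_prod.simps by (rule topical_comp[OF a b])
qed

lemma Git_op: "\<omega> \<in> space M \<Longrightarrow> Git (\<lambda>i. restrict (A i \<omega>) Dset) p n = pact (op_prod A n \<omega>) p"
proof (induction n)
  case (Suc n)
  have t: "topical (A (Suc n) \<omega>)" using topical[OF _ Suc.prems] by simp
  have "Git (\<lambda>i. restrict (A i \<omega>) Dset) p (Suc n) = T (restrict (A (Suc n) \<omega>) Dset) (Git (\<lambda>i. restrict (A i \<omega>) Dset) p n)"
    by (simp only: Git.simps)
  also have "\<dots> = pact (A (Suc n) \<omega>) (pact (op_prod A n \<omega>) p)"
    by (simp only: T_topical[OF t] Suc.IH[OF Suc.prems])
  also have "\<dots> = pact (op_prod A (Suc n) \<omega>) p"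
    using pact_comp[OF t op_prod_topical[OF Suc.prems, of n]] by simp
  finally show ?case .
qed simp

lemma sets_pair_nu: "sets (\<nu>0 \<Otimes>\<^sub>M M) = sets (borel \<Otimes>\<^sub>M M)"
  by (rule sets_pair_measure_cong[OF nu_sets refl])

lemma meas_Git: "(\<lambda>x. Git (\<lambda>i. restrict (A i (snd x)) Dset) (fst x) n) \<in> (borel \<Otimes>\<^sub>M M) \<rightarrow>\<^sub>M borel"
proof (induction n)
  case 0
  then show ?case by simp
next
  case (Suc n)
  have "(\<lambda>x. (restrict (A (Suc n) (snd x)) Dset, Git (\<lambda>i. restrict (A i (snd x)) Dset) (fst x) n))
          \<in> (borel \<Otimes>\<^sub>M M) \<rightarrow>\<^sub>M (OPS \<Otimes>\<^sub>M borel)"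
    by (rule measurable_Pair[OF measurable_compose[OF measurable_snd meas_Phi] Suc]) simp
  from measurable_compose[OF this meas_T] show ?case by (simp only: Git.simps fst_conv snd_conv)
qed

lemma meas_joint: "(\<lambda>x. pact (op_prod A n (snd x)) (fst x)) \<in> (\<nu>0 \<Otimes>\<^sub>M M) \<rightarrow>\<^sub>M borel"
proof -
  have "(\<lambda>x. Git (\<lambda>i. restrict (A i (snd x)) Dset) (fst x) n) \<in> (\<nu>0 \<Otimes>\<^sub>M M) \<rightarrow>\<^sub>M borel"
    using meas_Git measurable_cong_sets[OF sets_pair_nu refl] by blast
  moreover have "x \<in> space (\<nu>0 \<Otimes>\<^sub>M M) \<Longrightarrow>
      Git (\<lambda>i. restrict (A i (snd x)) Dset) (fst x) n = pact (op_prod A n (snd x)) (fst x)" for x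
    using Git_op by (auto simp: space_pair_measure)
  ultimately show ?thesis using measurable_cong by (smt (verit))
qed

lemma meas_joint1: "(\<lambda>x. pact (A 1 (snd x)) (fst x)) \<in> (\<nu>0 \<Otimes>\<^sub>M M) \<rightarrow>\<^sub>M borel"
  using meas_joint[of 1] by simp

lemma nu_sf: "sigma_finite_measure \<nu>0"
  using nu_prob prob_space_imp_sigma_finite by blast

lemma space_nu: "space \<nu>0 = UNIV"
  using sets_eq_imp_space_eq[OF nu_sets] by simp

lemma inv_fun:
  assumes h: "h \<in> borel_measurable borel"
  shows "(\<integral>\<^sup>+p. h p \<partial>\<nu>0) = (\<integral>\<^sup>+p. \<integral>\<^sup>+\<omega>. h (pact (A 1 \<omega>) p) \<partial>M \<partial>\<nu>0)"
proof -
  let ?F = "\<lambda>x. pact (A 1 (snd x)) (fst x)"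
  define \<nu>1 where "\<nu>1 = distr (\<nu>0 \<Otimes>\<^sub>M M) borel ?F"
  have eq: "\<nu>0 = \<nu>1"
  proof (rule measure_eqI)
    show "sets \<nu>0 = sets \<nu>1" unfolding \<nu>1_def using nu_sets by simp
    fix B assume "B \<in> sets \<nu>0"
    hence B: "B \<in> sets borel" using nu_sets by simp
    have "emeasure \<nu>1 B = emeasure (\<nu>0 \<Otimes>\<^sub>M M) (?F -` B \<inter> space (\<nu>0 \<Otimes>\<^sub>M M))"
      unfolding \<nu>1_def by (rule emeasure_distr[OF meas_joint1 B])
    also have "\<dots> = (\<integral>\<^sup>+p. emeasure M (Pair p -` (?F -` B \<inter> space (\<nu>0 \<Otimes>\<^sub>M M))) \<partial>\<nu>0)"
      by (rule emeasure_pair_measure_alt) (rule measurable_sets[OF meas_joint1 B])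
    also have "\<dots> = (\<integral>\<^sup>+p. emeasure M {\<omega> \<in> space M. pact (A 1 \<omega>) p \<in> B} \<partial>\<nu>0)"
      by (rule nn_integral_cong) (auto simp: space_pair_measure space_nu intro!: arg_cong[where f="emeasure M"])
    also have "\<dots> = emeasure \<nu>0 B" using nu_inv[OF B] by simp
    finally show "emeasure \<nu>0 B = emeasure \<nu>1 B" by simp
  qed
  have "(\<integral>\<^sup>+p. h p \<partial>\<nu>0) = (\<integral>\<^sup>+p. h p \<partial>\<nu>1)" using eq by simp
  also have "\<dots> = (\<integral>\<^sup>+x. h (?F x) \<partial>(\<nu>0 \<Otimes>\<^sub>M M))"
    unfolding \<nu>1_def by (rule nn_integral_distr[OF meas_joint1]) (simp add: h)
  also have "\<dots> = (\<integral>\<^sup>+p. \<integral>\<^sup>+\<omega>. h (pact (A 1 \<omega>) p) \<partial>M \<partial>\<nu>0)"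
    using nn_integral_fst[OF measurable_compose[OF meas_joint1 h]] by simp
  finally show ?thesis .
qed

end



lemma Git_restrict: "m \<le> n \<Longrightarrow> Git (restrict fs {1..n}) p m = Git fs p m"
  by (induction m) auto

lemma meas_Git_Pi: "m \<le> n \<Longrightarrow> (\<lambda>fs. Git fs p m) \<in> PiM {1..n} (\<lambda>_. OPS) \<rightarrow>\<^sub>M (borel :: 'd::finite projmax measure)"
proof (induction m)
  case 0
  then show ?case by simp
next
  case (Suc m)
  have "Suc m \<in> {1..n}" using Suc.prems by simp
  hence "(\<lambda>fs. (fs (Suc m), Git fs p m)) \<in> PiM {1..n} (\<lambda>_. OPS) \<rightarrow>\<^sub>M (OPS \<Otimes>\<^sub>M (borel :: 'd projmax measure))"
    using Suc by (intro measurable_Pair measurable_component_singleton) auto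
  from measurable_compose[OF this meas_T] show ?case by (simp only: Git.simps fst_conv snd_conv)
qed

context lm
begin

lemma meas_Kh:
  assumes h: "h \<in> borel_measurable borel"
  shows "(\<lambda>q. \<integral>\<^sup>+\<omega>. h (pact (A 1 \<omega>) q) \<partial>M) \<in> borel_measurable borel"
proof -
  have "(\<lambda>x. pact (A 1 (snd x)) (fst x)) \<in> (borel \<Otimes>\<^sub>M M) \<rightarrow>\<^sub>M borel"
    using meas_joint1 measurable_cong_sets[OF sets_pair_nu refl] by blast
  hence "(\<lambda>x. h (pact (A 1 (snd x)) (fst x))) \<in> borel_measurable (borel \<Otimes>\<^sub>M M)"
    using h by measurable
  from borel_measurable_nn_integral_fst[OF this] show ?thesis by simp
qed

lemma indep_step:
  assumes h: "h \<in> borel_measurable borel"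
  shows "(\<integral>\<^sup>+\<omega>. h (pact (op_prod A (Suc n) \<omega>) p) \<partial>M)
       = (\<integral>\<^sup>+\<omega>. (\<integral>\<^sup>+\<omega>'. h (pact (A 1 \<omega>') (pact (op_prod A n \<omega>) p)) \<partial>M) \<partial>M)"
proof -
  let ?Phi = "\<lambda>i \<omega>. restrict (A i \<omega>) Dset"
  let ?Kh = "\<lambda>q. \<integral>\<^sup>+\<omega>. h (pact (A 1 \<omega>) q) \<partial>M"
  define X where "X = (\<lambda>\<omega>. restrict (A (Suc n) \<omega>) Dset)"
  define U where "U = (\<lambda>\<omega>. restrict (\<lambda>i. ?Phi i \<omega>) {Suc n})"
  define V where "V = (\<lambda>\<omega>. restrict (\<lambda>i. ?Phi i \<omega>) {1..n})"
  define MU where "MU = PiM {Suc n} (\<lambda>_. (OPS :: (real ^ 'd \<Rightarrow> real ^ 'd) measure))"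
  define MV where "MV = PiM {1..n} (\<lambda>_. (OPS :: (real ^ 'd \<Rightarrow> real ^ 'd) measure))"
  have ind0: "indep_vars (\<lambda>_. OPS) (\<lambda>i \<omega>. restrict (A i \<omega>) Dset) {1..}"
    by (rule indep_vars_compose2[OF indep]) (rule meas_restrict_op)
  have ind: "indep_var MU U MV V"
    unfolding MU_def MV_def U_def V_def by (rule indep_var_restrict[OF ind0]) auto
  have rvU: "random_variable MU U" and rvV: "random_variable MV V"
    and deq: "distr M MU U \<Otimes>\<^sub>M distr M MV V = distr M (MU \<Otimes>\<^sub>M MV) (\<lambda>x. (U x, V x))"
    using ind[unfolded indep_var_distribution_eq] by auto
  have Veq: "\<omega> \<in> space M \<Longrightarrow> Git (V \<omega>) p n = pact (op_prod A n \<omega>) p" for \<omega>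
    unfolding V_def using Git_restrict[of n n "\<lambda>i. restrict (A i \<omega>) Dset" p] Git_op[of \<omega> p n] by simp
  have Ueq: "U \<omega> (Suc n) = X \<omega>" for \<omega> unfolding U_def X_def by simp
  define H where "H = (\<lambda>x. h (T (fst x) (snd x)))"
  have H: "H \<in> borel_measurable (OPS \<Otimes>\<^sub>M borel)"
    unfolding H_def using measurable_compose[OF meas_T h] by simp
  define G where "G = (\<lambda>x. H ((fst x) (Suc n), Git (snd x) p n))"
  have mcomp: "(\<lambda>u. u (Suc n)) \<in> MU \<rightarrow>\<^sub>M OPS" unfolding MU_def by (rule measurable_component_singleton) simp
  have mgit: "(\<lambda>v. Git v p n) \<in> MV \<rightarrow>\<^sub>M (borel :: 'd projmax measure)" unfolding MV_def by (rule meas_Git_Pi) simp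
  have G: "G \<in> borel_measurable (MU \<Otimes>\<^sub>M MV)"
  proof -
    have "(\<lambda>x. ((fst x) (Suc n), Git (snd x) p n)) \<in> (MU \<Otimes>\<^sub>M MV) \<rightarrow>\<^sub>M (OPS \<Otimes>\<^sub>M (borel :: 'd projmax measure))"
      by (rule measurable_Pair[OF measurable_compose[OF measurable_fst mcomp] measurable_compose[OF measurable_snd mgit]])
    from measurable_compose[OF this H] show ?thesis unfolding G_def by simp
  qed
  have XA: "distr M OPS X = distr M OPS (\<lambda>\<omega>. restrict (A 1 \<omega>) Dset)"
  proof -
    have "distr M OPS X = distr (distr M op_space (A (Suc n))) OPS (\<lambda>a. restrict a Dset)"
      unfolding X_def by (rule distr_distr[symmetric, OF meas_restrict_op rv, simplified comp_def]) simp
    also have "\<dots> = distr (distr M op_space (A 1)) OPS (\<lambda>a. restrict a Dset)"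
      using ident[of "Suc n"] by simp
    also have "\<dots> = distr M OPS (\<lambda>\<omega>. restrict (A 1 \<omega>) Dset)"
      by (rule distr_distr[OF meas_restrict_op rv, simplified comp_def]) simp
    finally show ?thesis .
  qed
  have rvX: "random_variable OPS X" unfolding X_def by (rule meas_Phi) simp
  interpret PU: prob_space "distr M MU U" by (rule prob_space_distr[OF rvU])
  interpret PV: prob_space "distr M MV V" by (rule prob_space_distr[OF rvV])
  interpret PP: pair_sigma_finite "distr M MU U" "distr M MV V" by unfold_locales
  have "(\<integral>\<^sup>+\<omega>. h (pact (op_prod A (Suc n) \<omega>) p) \<partial>M) = (\<integral>\<^sup>+\<omega>. G (U \<omega>, V \<omega>) \<partial>M)"
  proof (rule nn_integral_cong)
    fix \<omega> assume sp: "\<omega> \<in> space M"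
    have t: "topical (A (Suc n) \<omega>)" using topical[OF _ sp] by simp
    show "h (pact (op_prod A (Suc n) \<omega>) p) = G (U \<omega>, V \<omega>)"
      unfolding G_def H_def using Veq[OF sp] Ueq[of \<omega>] T_topical[OF t] pact_comp[OF t op_prod_topical[OF sp]]
      by (simp add: X_def)
  qed
  also have "\<dots> = (\<integral>\<^sup>+x. G x \<partial>distr M (MU \<Otimes>\<^sub>M MV) (\<lambda>x. (U x, V x)))"
    by (rule nn_integral_distr[symmetric]) (use rvU rvV G in auto)
  also have "\<dots> = (\<integral>\<^sup>+x. G x \<partial>(distr M MU U \<Otimes>\<^sub>M distr M MV V))" by (simp add: deq)
  also have "\<dots> = (\<integral>\<^sup>+v. \<integral>\<^sup>+u. G (u, v) \<partial>distr M MU U \<partial>distr M MV V)"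
    by (rule PP.nn_integral_snd[symmetric]) (use G in simp)
  also have "\<dots> = (\<integral>\<^sup>+v. ?Kh (Git v p n) \<partial>distr M MV V)"
  proof (rule nn_integral_cong)
    fix v assume "v \<in> space (distr M MV V)"
    hence vsp: "v \<in> space MV" by simp
    define q where "q = Git v p n"
    have mH1: "(\<lambda>\<phi>. H (\<phi>, q)) \<in> borel_measurable OPS" using H by measurable
    have "(\<integral>\<^sup>+u. G (u, v) \<partial>distr M MU U) = (\<integral>\<^sup>+\<omega>. G (U \<omega>, v) \<partial>M)"
      by (rule nn_integral_distr[OF rvU]) (use G vsp in measurable)
    also have "\<dots> = (\<integral>\<^sup>+\<omega>. H (X \<omega>, q) \<partial>M)" unfolding G_def q_def by (simp add: Ueq)
    also have "\<dots> = (\<integral>\<^sup>+\<phi>. H (\<phi>, q) \<partial>distr M OPS X)"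
      by (rule nn_integral_distr[symmetric, OF rvX]) (use mH1 in simp)
    also have "\<dots> = (\<integral>\<^sup>+\<phi>. H (\<phi>, q) \<partial>distr M OPS (\<lambda>\<omega>. restrict (A 1 \<omega>) Dset))"
      by (simp add: XA)
    also have "\<dots> = (\<integral>\<^sup>+\<omega>. H (restrict (A 1 \<omega>) Dset, q) \<partial>M)"
      by (rule nn_integral_distr[OF meas_Phi]) (use mH1 in simp_all)
    also have "\<dots> = ?Kh q"
    proof (rule nn_integral_cong)
      fix \<omega> assume sp: "\<omega> \<in> space M"
      have t: "topical (A 1 \<omega>)" using topical[OF _ sp] by simp
      show "H (restrict (A 1 \<omega>) Dset, q) = h (pact (A 1 \<omega>) q)" unfolding H_def using T_topical[OF t, of q] by (simp only: fst_conv snd_conv)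
    qed
    finally show "(\<integral>\<^sup>+u. G (u, v) \<partial>distr M MU U) = ?Kh (Git v p n)" unfolding q_def .
  qed
  also have "\<dots> = (\<integral>\<^sup>+\<omega>. ?Kh (Git (V \<omega>) p n) \<partial>M)"
    by (rule nn_integral_distr[OF rvV]) (use measurable_compose[OF mgit meas_Kh[OF h]] in simp)
  also have "\<dots> = (\<integral>\<^sup>+\<omega>. ?Kh (pact (op_prod A n \<omega>) p) \<partial>M)"
    by (rule nn_integral_cong) (simp add: Veq)
  finally show ?thesis .
qed

lemma iter_inv:
  assumes h: "h \<in> borel_measurable borel"
  shows "(\<integral>\<^sup>+p. h p \<partial>\<nu>0) = (\<integral>\<^sup>+p. \<integral>\<^sup>+\<omega>. h (pact (op_prod A n \<omega>) p) \<partial>M \<partial>\<nu>0)"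
  using h
proof (induction n arbitrary: h)
  case 0
  show ?case by (simp add: emeasure_space_1 pact_def)
next
  case (Suc n)
  let ?Kh = "\<lambda>q. \<integral>\<^sup>+\<omega>. h (pact (A 1 \<omega>) q) \<partial>M"
  have "(\<integral>\<^sup>+p. \<integral>\<^sup>+\<omega>. h (pact (op_prod A (Suc n) \<omega>) p) \<partial>M \<partial>\<nu>0)
        = (\<integral>\<^sup>+p. \<integral>\<^sup>+\<omega>. ?Kh (pact (op_prod A n \<omega>) p) \<partial>M \<partial>\<nu>0)"
    by (rule nn_integral_cong) (rule indep_step[OF Suc.prems])
  also have "\<dots> = (\<integral>\<^sup>+p. ?Kh p \<partial>\<nu>0)"
    by (rule Suc.IH[symmetric]) (rule meas_Kh[OF Suc.prems])
  also have "\<dots> = (\<integral>\<^sup>+p. h p \<partial>\<nu>0)" by (rule inv_fun[symmetric, OF Suc.prems])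
  finally have "(\<integral>\<^sup>+p. \<integral>\<^sup>+\<omega>. h (pact (op_prod A (Suc n) \<omega>) p) \<partial>M \<partial>\<nu>0) = (\<integral>\<^sup>+p. h p \<partial>\<nu>0)" .
  thus ?case by (rule sym)
qed

end



lemma countable_dense_sub:
  fixes K :: "(real ^ 'd::finite) set"
  assumes "K \<noteq> {}"
  obtains Kd where "countable Kd" "Kd \<subseteq> K" "Kd \<noteq> {}" "\<And>y \<epsilon>. y \<in> K \<Longrightarrow> \<epsilon> > 0 \<Longrightarrow> \<exists>z\<in>Kd. dist y z < \<epsilon>"
proof -
  define P where "P = (\<lambda>x (k::nat). \<exists>y\<in>K. dist x y < 1 / Suc k)"
  define f where "f = (\<lambda>(x, k::nat). SOME y. y \<in> K \<and> dist x y < 1 / Suc k)"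
  define Kd where "Kd = f ` {(x, k). x \<in> Dset \<and> P x k}"
  have fK: "P x k \<Longrightarrow> f (x, k) \<in> K \<and> dist x (f (x, k)) < 1 / Suc k" for x k
    unfolding f_def P_def by (simp, rule someI_ex, blast)
  have "countable Kd" unfolding Kd_def
    by (rule countable_image, rule countable_subset[of _ "Dset \<times> UNIV"]) (auto simp: countable_Dset)
  moreover have "Kd \<subseteq> K" unfolding Kd_def using fK by auto
  moreover have dense: "\<exists>z\<in>Kd. dist y z < \<epsilon>" if hy: "y \<in> K" "\<epsilon> > 0" for y \<epsilon>
  proof -
    obtain k :: nat where k: "1 / Suc k < \<epsilon> / 2" using hy(2)
      by (metis half_gt_zero nat_approx_posE)
    obtain x where x: "x \<in> Dset" "dist x y < 1 / Suc k" using Dset_dense[of "1 / Suc k" y] by auto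
    have Pk: "P x k" unfolding P_def using x hy(1) by blast
    hence "dist x (f (x, k)) < 1 / Suc k" using fK by blast
    hence "dist y (f (x, k)) < \<epsilon>" using x k dist_triangle[of y "f (x,k)" x] by (simp add: dist_commute)
    moreover have "f (x, k) \<in> Kd" unfolding Kd_def using x Pk by blast
    ultimately show ?thesis by blast
  qed
  moreover have "Kd \<noteq> {}" using assms dense[of _ 1] by fastforce
  ultimately show ?thesis using that by blast
qed

definition Bas :: "((real ^ 'd::finite) \<times> (real ^ 'd)) list \<Rightarrow> real \<Rightarrow> (real ^ 'd \<Rightarrow> real ^ 'd) set" where
  "Bas L r = {f. \<forall>xv\<in>set L. dist (f (fst xv)) (snd xv) < r}"

lemma Bas_sets: "Bas L r \<in> sets (op_space :: (real ^ 'd::finite \<Rightarrow> real ^ 'd) measure)"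
proof -
  have "Bas L r = {f \<in> space (op_space :: (real ^ 'd \<Rightarrow> real ^ 'd) measure). \<forall>xv\<in>set L. dist (f (fst xv)) (snd xv) < r}"
    unfolding Bas_def by (simp add: space_PiM)
  also have "\<dots> \<in> sets op_space" by measurable
  finally show ?thesis .
qed

context lm
begin

lemma meas_eval1[measurable]: "(\<lambda>\<omega>. A 1 \<omega> x) \<in> borel_measurable M"
  using meas_eval[of 1] by simp

lemma dist_lip:
  fixes f \<theta> :: "real ^ 'd \<Rightarrow> real ^ 'd"
  assumes "topical f" "topical \<theta>"
  shows "dist (f y) (\<theta> y) \<le> dist (f z) (\<theta> z) + 2 * real CARD('d) * dist y z"
proof -
  have "dist (f y) (\<theta> y) \<le> dist (f y) (f z) + dist (f z) (\<theta> z) + dist (\<theta> z) (\<theta> y)"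
    by (metis add.commute add_left_mono dist_triangle order_trans)
  moreover have "dist (f y) (f z) \<le> real CARD('d) * dist y z" by (rule topical_dist[OF assms(1)])
  moreover have "dist (\<theta> z) (\<theta> y) \<le> real CARD('d) * dist y z"
    using topical_dist[OF assms(2), of z y] by (simp add: dist_commute)
  ultimately show ?thesis by linarith
qed

lemma supset_meas:
  assumes th: "topical \<theta>" and K: "compact K" "K \<noteq> {}"
  shows "{\<omega> \<in> space M. (SUP x\<in>K. dist (A 1 \<omega> x) (\<theta> x)) < e} \<in> sets M"
proof -
  obtain Kd where Kd: "countable Kd" "Kd \<subseteq> K" "Kd \<noteq> {}"
    "\<And>y \<epsilon>. y \<in> K \<Longrightarrow> \<epsilon> > 0 \<Longrightarrow> \<exists>z\<in>Kd. dist y z < \<epsilon>"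
    using countable_dense_sub[OF K(2)] by blast
  define z where "z = from_nat_into Kd"
  have rz: "range z = Kd" unfolding z_def using Kd by simp
  define c where "c = real CARD('d)"
  have c: "c > 0" unfolding c_def by simp
  have eq: "(SUP x\<in>K. dist (A 1 \<omega> x) (\<theta> x)) < e \<longleftrightarrow>
       (\<exists>m::nat. \<forall>j::nat. dist (A 1 \<omega> (z j)) (\<theta> (z j)) \<le> e - 1 / Suc m)" if sp: "\<omega> \<in> space M" for \<omega>
  proof
    have ta: "topical (A 1 \<omega>)" using topical[OF _ sp] by simp
    let ?S = "(SUP x\<in>K. dist (A 1 \<omega> x) (\<theta> x))"
    assume "?S < e"
    then obtain m :: nat where m: "1 / Suc m < e - ?S"
      by (metis diff_gt_0_iff_gt nat_approx_posE)
    have "\<forall>j. dist (A 1 \<omega> (z j)) (\<theta> (z j)) \<le> e - 1 / Suc m"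
    proof
      fix j
      have "z j \<in> K" using rz Kd(2) by auto
      hence "dist (A 1 \<omega> (z j)) (\<theta> (z j)) \<le> ?S" by (rule sup_bound[OF ta th K(1)])
      thus "dist (A 1 \<omega> (z j)) (\<theta> (z j)) \<le> e - 1 / Suc m" using m by linarith
    qed
    thus "\<exists>m::nat. \<forall>j::nat. dist (A 1 \<omega> (z j)) (\<theta> (z j)) \<le> e - 1 / Suc m" by blast
  next
    have ta: "topical (A 1 \<omega>)" using topical[OF _ sp] by simp
    let ?S = "(SUP x\<in>K. dist (A 1 \<omega> x) (\<theta> x))"
    assume "\<exists>m::nat. \<forall>j::nat. dist (A 1 \<omega> (z j)) (\<theta> (z j)) \<le> e - 1 / Suc m"
    then obtain m :: nat where m: "\<forall>j. dist (A 1 \<omega> (z j)) (\<theta> (z j)) \<le> e - 1 / Suc m" by blast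
    have all: "dist (A 1 \<omega> y) (\<theta> y) \<le> e - 1 / Suc m" if y: "y \<in> K" for y
    proof (rule ccontr)
      assume nt: "\<not> ?thesis"
      define d where "d = dist (A 1 \<omega> y) (\<theta> y) - (e - 1 / Suc m)"
      have d: "d > 0" unfolding d_def using nt by simp
      obtain w where w: "w \<in> Kd" "dist y w < d / (2 * c)" using Kd(4)[OF y, of "d / (2*c)"] d c by auto
      obtain j where j: "z j = w" using rz w(1) by blast
      have "dist (A 1 \<omega> y) (\<theta> y) \<le> dist (A 1 \<omega> w) (\<theta> w) + 2 * c * dist y w"
        unfolding c_def by (rule dist_lip[OF ta th])
      moreover have "2 * c * dist y w < d" using w(2) c by (simp add: field_simps)
      moreover have "dist (A 1 \<omega> w) (\<theta> w) \<le> e - 1 / Suc m" using m j by blast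
      ultimately show False unfolding d_def by linarith
    qed
    have "?S \<le> e - 1 / Suc m" by (rule cSUP_least[OF K(2)]) (use all in blast)
    moreover have "(1::real) / Suc m > 0" by simp
    ultimately show "?S < e" by linarith
  qed
  have "{\<omega> \<in> space M. (SUP x\<in>K. dist (A 1 \<omega> x) (\<theta> x)) < e} =
        {\<omega> \<in> space M. \<exists>m::nat. \<forall>j::nat. dist (A 1 \<omega> (z j)) (\<theta> (z j)) \<le> e - 1 / Suc m}"
    using eq by blast
  also have "\<dots> \<in> sets M" by measurable
  finally show ?thesis .
qed

lemma not_supp:
  assumes sp: "\<omega> \<in> space M" and i: "i \<ge> 1" and ns: "A i \<omega> \<notin> op_support (A 1)"
  shows "\<exists>L m. L \<in> lists (Dset \<times> Dset) \<and> A i \<omega> \<in> Bas L (1 / Suc m) \<and>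
            prob (A 1 -` Bas L (1 / Suc m) \<inter> space M) = 0"
proof -
  define \<theta> where "\<theta> = A i \<omega>"
  have th: "topical \<theta>" unfolding \<theta>_def using topical[OF i sp] .
  then obtain K e where K: "compact K" "K \<noteq> {}" "e > 0"
    and np: "\<not> prob {\<omega> \<in> space M. (SUP x\<in>K. dist (A 1 \<omega> x) (\<theta> x)) < e} > 0"
    using ns unfolding op_support_def \<theta>_def by blast
  define SupS where "SupS = {\<omega> \<in> space M. (SUP x\<in>K. dist (A 1 \<omega> x) (\<theta> x)) < e}"
  have SupS0: "prob SupS = 0" using np unfolding SupS_def by (simp add: not_less measure_le_0_iff)
  have SupSm: "SupS \<in> sets M" unfolding SupS_def by (rule supset_meas[OF th K(1,2)])
  define c where "c = real CARD('d)"
  have c: "c > 0" unfolding c_def by simp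
  define \<eta> where "\<eta> = e / (8 * c)"
  have \<eta>: "\<eta> > 0" unfolding \<eta>_def using c K(3) by simp
  have "K \<subseteq> (\<Union>x\<in>Dset. ball x \<eta>)"
  proof
    fix y assume "y \<in> K"
    obtain x where "x \<in> Dset" "dist x y < \<eta>" using Dset_dense[OF \<eta>, of y] by blast
    thus "y \<in> (\<Union>x\<in>Dset. ball x \<eta>)" by auto
  qed
  then obtain F where F: "F \<subseteq> Dset" "finite F" "K \<subseteq> (\<Union>x\<in>F. ball x \<eta>)"
    using compactE_image[OF K(1), of Dset "\<lambda>x. ball x \<eta>"] by auto
  obtain m :: nat where m: "1 / Suc m < e / 8" using K(3)
    by (metis nat_approx_posE zero_less_divide_iff zero_less_numeral)
  define r where "r = 1 / real (Suc m)"
  have r: "r > 0" "r < e / 8" unfolding r_def using m by auto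
  have "\<forall>x. \<exists>v. v \<in> Dset \<and> dist v (\<theta> x) < r" using Dset_dense[OF r(1)] by blast
  then obtain v where v: "\<And>x. v x \<in> Dset" "\<And>x. dist (v x) (\<theta> x) < r" by metis
  obtain xs where xs: "set xs = F" using finite_list[OF F(2)] by blast
  define L where "L = map (\<lambda>x. (x, v x)) xs"
  have L: "L \<in> lists (Dset \<times> Dset)" unfolding L_def using xs F(1) v(1) by auto
  have thB: "\<theta> \<in> Bas L r" unfolding Bas_def L_def using v(2) by (auto simp: dist_commute)
  have sub: "A 1 -` Bas L r \<inter> space M \<subseteq> SupS"
  proof
    fix \<omega>' assume \<omega>': "\<omega>' \<in> A 1 -` Bas L r \<inter> space M"
    hence sp': "\<omega>' \<in> space M" and fB: "A 1 \<omega>' \<in> Bas L r" by auto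
    define f where "f = A 1 \<omega>'"
    have tf: "topical f" unfolding f_def using topical[OF _ sp'] by simp
    have fx: "dist (f x) (v x) < r" if "x \<in> F" for x
      using fB that xs unfolding Bas_def L_def f_def by auto
    have all: "dist (f y) (\<theta> y) \<le> e / 2" if y: "y \<in> K" for y
    proof -
      obtain x where x: "x \<in> F" "dist x y < \<eta>" using F(3) y by auto
      have "dist (f y) (\<theta> y) \<le> dist (f y) (f x) + dist (f x) (v x) + dist (v x) (\<theta> x) + dist (\<theta> x) (\<theta> y)"
        by (smt (verit) dist_triangle)
      moreover have "dist (f y) (f x) \<le> c * dist x y"
        using topical_dist[OF tf, of y x] unfolding c_def by (simp add: dist_commute)
      moreover have "dist (\<theta> x) (\<theta> y) \<le> c * dist x y"
        using topical_dist[OF th, of x y] unfolding c_def by simp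
      moreover have "c * dist x y \<le> e / 8"
        using x(2) c unfolding \<eta>_def by (simp add: field_simps)
      ultimately show ?thesis using fx[OF x(1)] v(2)[of x] r by linarith
    qed
    have "(SUP x\<in>K. dist (A 1 \<omega>' x) (\<theta> x)) \<le> e / 2"
      by (rule cSUP_least[OF K(2)]) (use all in \<open>simp add: f_def\<close>)
    thus "\<omega>' \<in> SupS" unfolding SupS_def using sp' K(3) by simp
  qed
  have "prob (A 1 -` Bas L r \<inter> space M) \<le> prob SupS" by (rule finite_measure_mono[OF sub SupSm])
  hence "prob (A 1 -` Bas L r \<inter> space M) = 0" using SupS0 by (simp add: measure_le_0_iff)
  thus ?thesis using L thB unfolding \<theta>_def r_def by blast
qed

lemma prob_Bas: "i \<ge> 1 \<Longrightarrow> prob (A i -` Bas L r \<inter> space M) = prob (A 1 -` Bas L r \<inter> space M)"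
proof -
  assume i: "i \<ge> 1"
  have "emeasure M (A i -` Bas L r \<inter> space M) = emeasure (distr M op_space (A i)) (Bas L r)"
    by (rule emeasure_distr[symmetric, OF rv[OF i] Bas_sets])
  also have "\<dots> = emeasure (distr M op_space (A 1)) (Bas L r)" using ident[OF i] by simp
  also have "\<dots> = emeasure M (A 1 -` Bas L r \<inter> space M)"
    by (rule emeasure_distr[OF rv Bas_sets]) simp
  finally show ?thesis by (simp add: measure_def)
qed

definition Zset :: "nat \<Rightarrow> 'w set" where
  "Zset N = (\<Union>i\<in>{1..N}. \<Union>(L, m)\<in>{(L, m). L \<in> lists (Dset \<times> Dset) \<and> prob (A 1 -` Bas L (1 / Suc m) \<inter> space M) = 0}.
      A i -` Bas L (1 / Suc m) \<inter> space M)"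

lemma Zset_null: "Zset N \<in> null_sets M"
  unfolding Zset_def
proof (rule null_sets_UN')
  show "countable {1..N}" by simp
  fix i assume i: "i \<in> {1..N}"
  show "(\<Union>(L, m)\<in>{(L, m). L \<in> lists (Dset \<times> Dset) \<and> prob (A 1 -` Bas L (1 / Suc m) \<inter> space M) = 0}.
          A i -` Bas L (1 / Suc m) \<inter> space M) \<in> null_sets M"
  proof (rule null_sets_UN')
    show "countable {(L, m). L \<in> lists (Dset \<times> Dset) \<and> prob (A 1 -` Bas L (1 / Suc m) \<inter> space M) = 0}"
      by (rule countable_subset[of _ "lists (Dset \<times> Dset) \<times> UNIV"]) (auto simp: countable_Dset)
    fix Lm assume Lm: "Lm \<in> {(L, m). L \<in> lists (Dset \<times> Dset) \<and> prob (A 1 -` Bas L (1 / Suc m) \<inter> space M) = 0}"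
    obtain L m where Lm': "Lm = (L, m)" by (cases Lm)
    have i1: "i \<ge> 1" using i by simp
    have s: "A i -` Bas L (1 / Suc m) \<inter> space M \<in> sets M"
      by (rule measurable_sets[OF rv[OF i1] Bas_sets])
    have "prob (A i -` Bas L (1 / Suc m) \<inter> space M) = 0" using prob_Bas[OF i1] Lm Lm' by simp
    hence "A i -` Bas L (1 / Suc m) \<inter> space M \<in> null_sets M" using s by (simp add: null_sets_def emeasure_eq_measure)
    thus "(case Lm of (L, m) \<Rightarrow> A i -` Bas L (1 / Suc m) \<inter> space M) \<in> null_sets M" using Lm' by simp
  qed
qed

lemma good_supp: "\<omega> \<in> space M \<Longrightarrow> \<omega> \<notin> Zset N \<Longrightarrow> i \<in> {1..N} \<Longrightarrow> A i \<omega> \<in> op_support (A 1)"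
proof (rule ccontr)
  assume sp: "\<omega> \<in> space M" and nz: "\<omega> \<notin> Zset N" and i: "i \<in> {1..N}" and ns: "A i \<omega> \<notin> op_support (A 1)"
  obtain L m where "L \<in> lists (Dset \<times> Dset)" "A i \<omega> \<in> Bas L (1 / Suc m)"
    "prob (A 1 -` Bas L (1 / Suc m) \<inter> space M) = 0"
    using not_supp[OF sp _ ns] i by auto
  hence "\<omega> \<in> Zset N" unfolding Zset_def using i sp by blast
  thus False using nz by blast
qed

end



lemma continuous_pact: "topical a \<Longrightarrow> continuous_on S (pact a)"
  unfolding continuous_on_iff
proof (intro ballI allI impI)
  fix x e assume t: "topical a" and "x \<in> S" "(0::real) < e"
  show "\<exists>d>0. \<forall>x'\<in>S. dist x' x < d \<longrightarrow> dist (pact a x') (pact a x) < e"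
  proof (intro exI[of _ e] conjI ballI impI)
    fix x' assume "dist x' x < e"
    thus "dist (pact a x') (pact a x) < e" using pact_dist[OF t, of x' x] by linarith
  qed (use \<open>e > 0\<close> in auto)
qed

context lm
begin

definition Tset where "Tset = {pclass (\<theta> (const_vec 1)) | \<theta>. \<theta> \<in> comp_semigroup (op_support (A 1)) \<and> rank_one \<theta>}"

lemma absorb1:
  assumes a: "a \<in> op_support (A 1)" and p: "p \<in> closure Tset"
  shows "pact a p \<in> closure Tset"
proof -
  have ta: "topical a" using a unfolding op_support_def by blast
  have "pact a ` Tset \<subseteq> closure Tset"
  proof
    fix y assume "y \<in> pact a ` Tset"
    then obtain \<theta> where th: "\<theta> \<in> comp_semigroup (op_support (A 1))" "rank_one \<theta>"
      and y: "y = pact a (pclass (\<theta> (const_vec 1)))" unfolding Tset_def by blast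
    have "pact a (pclass (\<theta> (const_vec 1))) = pclass (a (\<theta> (const_vec 1)))" by (rule pact_pclass[OF ta])
    hence y2: "y = pclass ((a \<circ> \<theta>) (const_vec 1))" unfolding y by simp
    have "a \<circ> \<theta> \<in> comp_semigroup (op_support (A 1))"
      by (rule comp_semigroup.comp[OF comp_semigroup.gen[OF a] th(1)])
    moreover have "rank_one (a \<circ> \<theta>)"
      unfolding rank_one_def
    proof (intro allI)
      fix x z
      have "pclass (\<theta> x) = pclass (\<theta> z)" using th(2) unfolding rank_one_def by blast
      hence "pact a (pclass (\<theta> x)) = pact a (pclass (\<theta> z))" by simp
      thus "pclass ((a \<circ> \<theta>) x) = pclass ((a \<circ> \<theta>) z)" by (simp only: pact_pclass[OF ta] comp_apply)
    qed
    ultimately have "y \<in> Tset" using y2 unfolding Tset_def by (intro CollectI exI[of _ "a \<circ> \<theta>"]) simp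
    thus "y \<in> closure Tset" using closure_subset by blast
  qed
  hence "pact a ` closure Tset \<subseteq> closure Tset"
    by (rule image_closure_subset[OF continuous_pact[OF ta] closed_closure])
  thus ?thesis using p by blast
qed

lemma absorbN:
  assumes sp: "\<omega> \<in> space M" and good: "\<forall>i\<in>{1..n}. A i \<omega> \<in> op_support (A 1)" and p: "p \<in> closure Tset"
  shows "pact (op_prod A n \<omega>) p \<in> closure Tset"
  using good
proof (induction n)
  case 0
  then show ?case using p by (simp add: pact_def)
next
  case (Suc n)
  have t: "topical (A (Suc n) \<omega>)" using topical[OF _ sp] by simp
  have "pact (op_prod A n \<omega>) p \<in> closure Tset" using Suc by simp
  moreover have "A (Suc n) \<omega> \<in> op_support (A 1)" using Suc.prems by simp
  ultimately have "pact (A (Suc n) \<omega>) (pact (op_prod A n \<omega>) p) \<in> closure Tset" by (rule absorb1[rotated])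
  moreover have eq: "pact (op_prod A (Suc n) \<omega>) p = pact (A (Suc n) \<omega>) (pact (op_prod A n \<omega>) p)"
    using pact_comp[OF t op_prod_topical[OF sp]] by (simp only: op_prod.simps)
  ultimately show ?case by (simp only: eq)
qed

lemma op_prod_sg:
  assumes "n \<ge> 1" and good: "\<forall>i\<in>{1..n}. A i \<omega> \<in> op_support (A 1)"
  shows "op_prod A n \<omega> \<in> comp_semigroup (op_support (A 1))"
  using assms
proof (induction n rule: nat_induct_at_least)
  case base
  then show ?case using comp_semigroup.gen[of "A 1 \<omega>"] by simp
next
  case (Suc n)
  have g: "A (Suc n) \<omega> \<in> op_support (A 1)" using Suc.prems by simp
  have "op_prod A n \<omega> \<in> comp_semigroup (op_support (A 1))" using Suc by simp
  hence "A (Suc n) \<omega> \<circ> op_prod A n \<omega> \<in> comp_semigroup (op_support (A 1))"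
    by (rule comp_semigroup.comp[OF comp_semigroup.gen[OF g]])
  thus ?case by (simp only: op_prod.simps)
qed

lemma hit:
  assumes "N \<ge> 1" and good: "\<forall>i\<in>{1..N}. A i \<omega> \<in> op_support (A 1)" and r: "rank_one (op_prod A N \<omega>)"
  shows "pact (op_prod A N \<omega>) p \<in> closure Tset"
proof -
  have "pact (op_prod A N \<omega>) p \<in> Tset"
    using pact_rank_one[OF r] op_prod_sg[OF assms(1) good] r unfolding Tset_def by blast
  thus ?thesis using closure_subset by blast
qed

lemma supp_sub: "measure_support \<nu>0 \<subseteq> closure Tset"
proof -
  obtain N where N: "N \<ge> 1" and qpos: "measure M {\<omega> \<in> space M. rank_one (op_prod A N \<omega>)} > 0"
    using memory_loss by blast
  define E where "E = {\<omega> \<in> space M. rank_one (op_prod A N \<omega>)}"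
  define q where "q = prob E"
  have q: "q > 0" using qpos unfolding q_def E_def .
  have Es: "E \<in> sets M" using q measure_notin_sets unfolding q_def by force
  define V where "V = - closure Tset"
  have Vo: "open V" unfolding V_def by auto
  have Vs: "V \<in> sets borel" using Vo by simp
  define Z where "Z = Zset N"
  have Zn: "Z \<in> null_sets M" unfolding Z_def by (rule Zset_null)
  have good: "\<forall>i\<in>{1..N}. A i \<omega> \<in> op_support (A 1)" if "\<omega> \<in> space M" "\<omega> \<notin> Z" for \<omega>
    using good_supp that unfolding Z_def by blast
  define g where "g = (\<lambda>p. emeasure M {\<omega> \<in> space M. pact (op_prod A N \<omega>) p \<in> V})"
  have mp: "(\<lambda>\<omega>. pact (op_prod A N \<omega>) p) \<in> M \<rightarrow>\<^sub>M borel" for p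
    using measurable_Pair2[OF meas_joint[of N], of p] space_nu by simp
  have gset: "{\<omega> \<in> space M. pact (op_prod A N \<omega>) p \<in> V} \<in> sets M" for p
    using measurable_sets[OF mp Vs] by (simp add: vimage_def Int_def conj_commute)
  have "emeasure \<nu>0 V = (\<integral>\<^sup>+p. indicator V p \<partial>\<nu>0)"
    using open_sets_nu[OF Vo] by simp
  also have "\<dots> = (\<integral>\<^sup>+p. \<integral>\<^sup>+\<omega>. indicator V (pact (op_prod A N \<omega>) p) \<partial>M \<partial>\<nu>0)"
    by (rule iter_inv) (use Vs in simp)
  also have "\<dots> = (\<integral>\<^sup>+p. g p \<partial>\<nu>0)"
  proof (rule nn_integral_cong)
    fix p
    have "(\<integral>\<^sup>+\<omega>. indicator V (pact (op_prod A N \<omega>) p) \<partial>M)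
          = (\<integral>\<^sup>+\<omega>. indicator {\<omega> \<in> space M. pact (op_prod A N \<omega>) p \<in> V} \<omega> \<partial>M)"
      by (rule nn_integral_cong) (auto simp: indicator_def)
    also have "\<dots> = g p" unfolding g_def by (rule nn_integral_indicator[OF gset])
    finally show "(\<integral>\<^sup>+\<omega>. indicator V (pact (op_prod A N \<omega>) p) \<partial>M) = g p" .
  qed
  also have "\<dots> \<le> (\<integral>\<^sup>+p. ennreal (1 - q) * indicator V p \<partial>\<nu>0)"
  proof (rule nn_integral_mono)
    fix p
    show "g p \<le> ennreal (1 - q) * indicator V p"
    proof (cases "p \<in> V")
      case True
      have "{\<omega> \<in> space M. pact (op_prod A N \<omega>) p \<in> V} \<subseteq> (space M - E) \<union> Z"
      proof
        fix \<omega> assume w: "\<omega> \<in> {\<omega> \<in> space M. pact (op_prod A N \<omega>) p \<in> V}"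
        show "\<omega> \<in> (space M - E) \<union> Z"
        proof (rule ccontr)
          assume "\<omega> \<notin> (space M - E) \<union> Z"
          hence "\<omega> \<in> E" "\<omega> \<notin> Z" using w by auto
          hence "pact (op_prod A N \<omega>) p \<in> closure Tset"
            using hit[OF N good] unfolding E_def by blast
          thus False using w unfolding V_def by auto
        qed
      qed
      hence "g p \<le> emeasure M ((space M - E) \<union> Z)"
        unfolding g_def using Es Zn by (intro emeasure_mono) auto
      also have "\<dots> \<le> emeasure M (space M - E) + emeasure M Z"
        using Es Zn by (intro emeasure_subadditive) auto
      also have "\<dots> = ennreal (1 - q)"
      proof -
        have "emeasure M Z = 0" using Zn by auto
        moreover have "emeasure M (space M - E) = ennreal (1 - q)"
          using prob_compl[OF Es] unfolding q_def by (simp add: emeasure_eq_measure)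
        ultimately show ?thesis by simp
      qed
      finally show ?thesis using True by simp
    next
      case False
      hence pC: "p \<in> closure Tset" unfolding V_def by simp
      have "{\<omega> \<in> space M. pact (op_prod A N \<omega>) p \<in> V} \<subseteq> Z"
      proof
        fix \<omega> assume w: "\<omega> \<in> {\<omega> \<in> space M. pact (op_prod A N \<omega>) p \<in> V}"
        show "\<omega> \<in> Z"
        proof (rule ccontr)
          assume "\<omega> \<notin> Z"
          hence "pact (op_prod A N \<omega>) p \<in> closure Tset" using absorbN[OF _ good pC] w by blast
          thus False using w unfolding V_def by auto
        qed
      qed
      hence "g p \<le> emeasure M Z" unfolding g_def using Zn by (intro emeasure_mono) auto
      moreover have "emeasure M Z = 0" using Zn by auto
      ultimately show ?thesis using False by simp
    qed
  qed
  also have "\<dots> = ennreal (1 - q) * emeasure \<nu>0 V"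
    using nn_integral_cmult_indicator[OF open_sets_nu[OF Vo]] by simp
  finally have ineq: "emeasure \<nu>0 V \<le> ennreal (1 - q) * emeasure \<nu>0 V" .
  interpret NU: prob_space \<nu>0 by (rule nu_prob)
  define m where "m = measure \<nu>0 V"
  have m0: "m \<ge> 0" unfolding m_def by simp
  have q1: "q \<le> 1" unfolding q_def by simp
  have "ennreal m \<le> ennreal ((1 - q) * m)"
    using ineq unfolding m_def NU.emeasure_eq_measure by (simp add: ennreal_mult q1)
  hence "m \<le> (1 - q) * m" using m0 q1 by (simp add: ennreal_le_iff)
  hence "q * m \<le> 0" by (simp add: algebra_simps)
  hence "m = 0" using q m0 by (smt (verit) mult_pos_pos)
  hence V0: "emeasure \<nu>0 V = 0" unfolding m_def NU.emeasure_eq_measure by simp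
  show ?thesis
  proof
    fix x assume x: "x \<in> measure_support \<nu>0"
    show "x \<in> closure Tset"
    proof (rule ccontr)
      assume "x \<notin> closure Tset"
      hence "x \<in> V" unfolding V_def by simp
      hence "emeasure \<nu>0 V > 0" using x Vo unfolding measure_support_def by blast
      thus False using V0 by simp
    qed
  qed
qed

lemma main: "measure_support \<nu>0 = closure {pclass (\<theta> (const_vec 1)) | \<theta>. \<theta> \<in> comp_semigroup (op_support (A 1)) \<and> rank_one \<theta>}"
  using supp_sub supp_sup unfolding Tset_def by blast

end

theorem lemma3p1:
  fixes M :: "'w measure"
    and A :: "nat \<Rightarrow> 'w \<Rightarrow> (real ^ 'd \<Rightarrow> real ^ 'd)"
    and \<nu>0 :: "'d projmax measure"
  assumes "prob_space M"
    and rv: "\<And>n. n \<ge> 1 \<Longrightarrow> A n \<in> M \<rightarrow>\<^sub>M op_space"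
    and topical: "\<And>n \<omega>. n \<ge> 1 \<Longrightarrow> \<omega> \<in> space M \<Longrightarrow> topical (A n \<omega>)"
    and indep: "prob_space.indep_vars M (\<lambda>_. op_space) A {1..}"
    and ident: "\<And>n. n \<ge> 1 \<Longrightarrow> distr M op_space (A n) = distr M op_space (A 1)"
    and memory_loss: "\<exists>N\<ge>1. measure M {\<omega> \<in> space M. rank_one (op_prod A N \<omega>)} > 0"
    and nu_prob: "prob_space \<nu>0"
    and nu_sets: "sets \<nu>0 = sets borel"
    and nu_inv: "\<And>B. B \<in> sets borel \<Longrightarrow>
        emeasure \<nu>0 B = (\<integral>\<^sup>+ p. emeasure M {\<omega> \<in> space M. pact (A 1 \<omega>) p \<in> B} \<partial>\<nu>0)"
  shows "measure_support \<nu>0 =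
    closure {pclass (\<theta> (const_vec 1)) | \<theta>.
       \<theta> \<in> comp_semigroup (prob_space.op_support M (A 1)) \<and> rank_one \<theta>}"
proof -
  have "lm M A \<nu>0"
    unfolding lm_def lm_axioms_def using assms by blast
  then interpret lm M A \<nu>0 .
  show ?thesis using main by simp
qed

end
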